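(* Let $A$ and $B$ be independent, $(A_n,B_n)_{n\in\mathbb N}$ i.i.d. copies of $(A,B)$, and $X=\sum_{k\ge1}\Pi_{k-1}B_k$ converging a.s. Suppose $\mathbb P\{A=1\}\in[0,1)$ and that one of the following holds: (a) $\mathbb P\{A\in(0,1]\}=1$; (b) $\mathbb P\{A\in(-1,0)\}=1$; (c) $\mathbb P\{|A|\in(0,1]\}=1$ and $\mathbb P\{A=-1\}\in(0,1)$. Suppose $\mathbb P\{B>x\}\sim g(x)e^{-bx}$ as $x\to\infty$ for some $b>0$ and some function $g$ such that $x\mapsto g(\log x)$ is slowly varying at $\infty$ and $\limsup_{x\to\infty}\big(\sup_{1\le y\le x}g(y)\big)/g(x)<\infty$. If $\mathbb E\psi(bA)<\infty$, then $$\mathbb P\{X>x\}\sim \mathbb E\psi(bA)\,\mathbb P\{B>x\},\quad x\to\infty.$$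
   Context: $\Pi_0:=1$, $\Pi_n:=A_1\cdots A_n$. $\psi(s):=\mathbb E e^{sX}$ (finite or infinite), and $\mathbb E\psi(bA)=\int\psi(ba)\,\mathbb P\{A\in da\}$. *)

theory Defs
  imports "HOL-Probability.Probability"
begin

definition slowly_varying :: "(real \<Rightarrow> real) \<Rightarrow> bool" where
  "slowly_varying L \<longleftrightarrow>
     (\<exists>a. set_borel_measurable borel {a..} L \<and> (\<forall>x\<ge>a. L x > 0)) \<and>
     (\<forall>c>0. ((\<lambda>x. L (c * x) / L x) \<longlongrightarrow> 1) at_top)"

definition mgf :: "'a measure \<Rightarrow> ('a \<Rightarrow> real) \<Rightarrow> real \<Rightarrow> ennreal" where
  "mgf M X s = (\<integral>\<^sup>+ \<omega>. ennreal (exp (s * X \<omega>)) \<partial>M)"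

definition perpetuity :: "(nat \<Rightarrow> 'a \<Rightarrow> real) \<Rightarrow> (nat \<Rightarrow> 'a \<Rightarrow> real) \<Rightarrow> 'a \<Rightarrow> real" where
  "perpetuity As Bs \<omega> = (\<Sum>k. (\<Prod>i\<in>{1..k}. As i \<omega>) * Bs (Suc k) \<omega>)"

end

theory Submission
  imports Defs
begin


lemma filterlim_shift_real: "filterlim (\<lambda>x::real. x - y) at_top at_top"
  unfolding filterlim_at_top eventually_at_top_linorder
proof (intro allI)
  fix Z :: real show "\<exists>N. \<forall>n\<ge>N. Z \<le> n - y" by (rule exI[of _ "Z+y"]) auto
qed

lemma sv_pos:
  assumes sv: "slowly_varying (\<lambda>x. g (ln x))"
  shows "eventually (\<lambda>x. g x > 0) at_top"
proof -
  from sv obtain a where a: "\<forall>x\<ge>a. g (ln x) > 0" unfolding slowly_varying_def by blast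
  show ?thesis unfolding eventually_at_top_linorder
  proof (intro exI allI impI)
    fix y assume "ln (max a 1) \<le> y"
    then have "max a 1 \<le> exp y" by (metis exp_ln max.strict_coboundedI2 zero_less_one exp_le_cancel_iff)
    then have "g (ln (exp y)) > 0" using a by auto
    then show "g y > 0" by simp
  qed
qed

lemma sv_shift:
  assumes sv: "slowly_varying (\<lambda>x. g (ln x))"
  shows "((\<lambda>x. g (x - y) / g x) \<longlongrightarrow> 1) at_top"
proof -
  from sv have "((\<lambda>u. g (ln (exp (-y) * u)) / g (ln u)) \<longlongrightarrow> 1) at_top"
    unfolding slowly_varying_def by auto
  from filterlim_compose[OF this exp_at_top]
  have "((\<lambda>x. g (ln (exp (-y) * exp x)) / g (ln (exp x))) \<longlongrightarrow> 1) at_top" by (simp add: o_def)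
  moreover have "\<And>x. ln (exp (-y) * exp x) = x - y" by (simp add: ln_mult)
  ultimately show ?thesis by simp
qed

lemma T_shift:
  fixes T g :: "real \<Rightarrow> real"
  assumes tail: "T \<sim>[at_top] (\<lambda>x. g x * exp (- b * x))"
    and sv: "slowly_varying (\<lambda>x. g (ln x))"
  shows "((\<lambda>x. T (x - y) / T x) \<longlongrightarrow> exp (b * y)) at_top"
proof -
  define h where "h = (\<lambda>x. g x * exp (- b * x))"
  have ev: "eventually (\<lambda>x. h (x - y) / h x = g (x - y) / g x * exp (b * y)) at_top"
    using sv_pos[OF sv]
  proof eventually_elim
    case (elim x)
    have "exp (- b * (x - y)) = exp (- b * x) * exp (b * y)"
      by (simp add: exp_add[symmetric] algebra_simps)
    then show ?case using elim by (simp add: h_def field_simps)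
  qed
  have "((\<lambda>x. g (x - y) / g x * exp (b * y)) \<longlongrightarrow> 1 * exp (b * y)) at_top"
    by (intro tendsto_mult sv_shift[OF sv] tendsto_const)
  then have lim: "((\<lambda>x. h (x - y) / h x) \<longlongrightarrow> exp (b * y)) at_top"
    using tendsto_cong[OF ev] by simp
  have "(\<lambda>x. T (x - y)) \<sim>[at_top] (\<lambda>x. h (x - y))"
    using asymp_equiv_compose'[OF tail[folded h_def] filterlim_shift_real] .
  then have "(\<lambda>x. T (x - y) / T x) \<sim>[at_top] (\<lambda>x. h (x - y) / h x)"
    by (intro asymp_equiv_divide tail[folded h_def])
  then show ?thesis
    using asymp_equiv_tendsto_transfer[OF asymp_equiv_symI lim] by blast
qed

lemma tail_ratio_limit:
  fixes T g :: "real \<Rightarrow> real" and b :: real and N :: "'b measure" and Y :: "'b \<Rightarrow> real"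
  assumes b: "b > 0"
    and T_anti: "\<And>x y. x \<le> y \<Longrightarrow> T y \<le> T x"
    and T_nonneg: "\<And>x. 0 \<le> T x" and T_le1: "\<And>x. T x \<le> 1"
    and tail: "T \<sim>[at_top] (\<lambda>x. g x * exp (- b * x))"
    and sv: "slowly_varying (\<lambda>x. g (ln x))"
    and sup_g: "Limsup at_top (\<lambda>x. (SUP y\<in>{1..x}. ereal (g y)) / ereal (g x)) < \<infinity>"
    and N: "prob_space N" and Y: "Y \<in> borel_measurable N"
    and intY: "integrable N (\<lambda>z. exp (b * Y z))"
  shows "((\<lambda>x. (\<integral>z. T (x - Y z) \<partial>N) / T x) \<longlongrightarrow> (\<integral>z. exp (b * Y z) \<partial>N)) at_top"
proof -
  interpret N: prob_space N by fact
  define h where "h = (\<lambda>x. g x * exp (- b * x))"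
  obtain n :: nat where "Limsup at_top (\<lambda>x. (SUP y\<in>{1..x}. ereal (g y)) / ereal (g x)) < ereal (real n)"
    using sup_g less_PInf_Ex_of_nat by auto
  then have ev1: "eventually (\<lambda>x. (SUP y\<in>{1..x}. ereal (g y)) / ereal (g x) < ereal (real n)) at_top"
    by (rule Limsup_lessD)
  define K where "K = real n"
  have ev3: "eventually (\<lambda>x. norm (T x) \<le> 2 * norm (h x)) at_top"
    using asymp_equiv_imp_eventually_le[OF tail[folded h_def], of 2] by simp
  have ev4: "eventually (\<lambda>x. norm (T x) \<ge> 1/2 * norm (h x)) at_top"
    using asymp_equiv_imp_eventually_ge[OF tail[folded h_def], of "1/2"] by simp
  have ev5: "eventually (\<lambda>x. (1::real) \<le> x) at_top" by (rule eventually_ge_at_top)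
  have "eventually (\<lambda>x. (SUP y\<in>{1..x}. ereal (g y)) / ereal (g x) < ereal K \<and> g x > 0 \<and>
      norm (T x) \<le> 2 * norm (h x) \<and> norm (T x) \<ge> 1/2 * norm (h x) \<and> 1 \<le> x) at_top"
    using ev1 sv_pos[OF sv] ev3 ev4 ev5 unfolding K_def by eventually_elim auto
  then obtain x0 where x0: "\<And>x. x \<ge> x0 \<Longrightarrow> (SUP y\<in>{1..x}. ereal (g y)) / ereal (g x) < ereal K \<and> g x > 0 \<and>
      norm (T x) \<le> 2 * norm (h x) \<and> norm (T x) \<ge> 1/2 * norm (h x) \<and> 1 \<le> x"
    unfolding eventually_at_top_linorder by blast
  have gpos: "\<And>x. x \<ge> x0 \<Longrightarrow> g x > 0" using x0 by blast
  have hpos: "\<And>x. x \<ge> x0 \<Longrightarrow> h x > 0" using gpos by (simp add: h_def)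
  have Tup: "\<And>x. x \<ge> x0 \<Longrightarrow> T x \<le> 2 * h x"
    using x0 hpos T_nonneg by fastforce
  have Tlo: "\<And>x. x \<ge> x0 \<Longrightarrow> h x \<le> 2 * T x"
    using x0 hpos T_nonneg by fastforce
  have Tpos: "\<And>x. x \<ge> x0 \<Longrightarrow> T x > 0" using Tlo hpos by (smt (verit))
  have x01: "1 \<le> x0" using x0 by blast
  have bnd: "g y \<le> K * g x" if "x \<ge> x0" "1 \<le> y" "y \<le> x" for x y
  proof -
    have "ereal (g y) \<le> (SUP y\<in>{1..x}. ereal (g y))" using that by (intro SUP_upper) auto
    then have "ereal (g y) / ereal (g x) \<le> (SUP y\<in>{1..x}. ereal (g y)) / ereal (g x)"
      using gpos[OF that(1)] by (intro ereal_divide_right_mono) auto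
    also have "\<dots> < ereal K" using x0[OF that(1)] by blast
    finally have "g y / g x < K" using gpos[OF that(1)] by simp
    then show ?thesis using gpos[OF that(1)] by (simp add: divide_less_eq)
  qed
  have Kpos: "K \<ge> 1" using bnd[of x0 x0] x01 gpos[of x0] by simp
  have c0: "\<And>x. x \<ge> x0 \<Longrightarrow> g x0 \<le> K * g x" using bnd x01 by simp
  have rb: "T (x - Y z) / T x \<le> 1 + 4 * K * exp (b * Y z)" if "x \<ge> x0" "Y z \<le> x - x0" for x z
  proof (cases "Y z \<le> 0")
    case True
    then have "T (x - Y z) \<le> T x" by (intro T_anti) auto
    then have "T (x - Y z) / T x \<le> 1" using Tpos[OF that(1)] by simp
    then show ?thesis using Kpos by (smt (verit) exp_gt_zero mult_pos_pos)
  next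
    case False
    define u where "u = x - Y z"
    have u: "x0 \<le> u" "u \<le> x" using that False by (auto simp: u_def)
    have "T u \<le> 2 * (g u * exp (- b * u))" using Tup[OF u(1)] by (simp add: h_def)
    also have "\<dots> \<le> 2 * (K * g x * exp (- b * u))"
      using bnd[OF that(1) _ u(2)] u x01 by (intro mult_left_mono mult_right_mono) auto
    also have "exp (- b * u) = exp (- b * x) * exp (b * Y z)"
      by (simp add: u_def exp_add[symmetric] algebra_simps)
    finally have 1: "T u \<le> 4 * K * exp (b * Y z) * (g x * exp (- b * x) / 2)" by (simp add: algebra_simps)
    have 2: "g x * exp (- b * x) / 2 \<le> T x" using Tlo[OF that(1)] by (simp add: h_def)
    have "T u \<le> 4 * K * exp (b * Y z) * T x"
      using 1 2 Kpos by (smt (verit) exp_gt_zero mult_left_mono mult_pos_pos)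
    then have "T u / T x \<le> 4 * K * exp (b * Y z)" using Tpos[OF that(1)] by (simp add: divide_le_eq)
    then show ?thesis by (simp add: u_def)
  qed
  have measT: "(\<lambda>z. T (x - Y z)) \<in> borel_measurable N" for x
  proof -
    have "mono (\<lambda>u. T (x - u))" by (intro monoI T_anti) auto
    then have "(\<lambda>u. T (x - u)) \<in> borel_measurable borel" by (rule borel_measurable_mono)
    from measurable_compose[OF Y this] show ?thesis by (simp add: o_def)
  qed
  define s1 where "s1 = (\<lambda>x z. if Y z \<le> x - x0 then T (x - Y z) / T x else 0)"
  define s2 where "s2 = (\<lambda>x z. if Y z \<le> x - x0 then 0 else T (x - Y z) / T x)"
  have ms1: "s1 x \<in> borel_measurable N" for x unfolding s1_def using measT Y by measurable
  have ms2: "s2 x \<in> borel_measurable N" for x unfolding s2_def using measT Y by measurable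
  have rb0: "norm (T (x - Y z) / T x) \<le> 1 / T x" for x z
    using T_nonneg[of x] T_nonneg[of "x - Y z"] T_le1[of "x - Y z"]
    by (simp add: divide_right_mono)
  have is1: "integrable N (s1 x)" for x
    by (rule N.integrable_const_bound[where B="1 / T x"]) (use rb0 ms1 T_nonneg in \<open>auto simp: s1_def\<close>)
  have is2: "integrable N (s2 x)" for x
    by (rule N.integrable_const_bound[where B="1 / T x"]) (use rb0 ms2 T_nonneg in \<open>auto simp: s2_def\<close>)
  have split: "(\<integral>z. T (x - Y z) \<partial>N) / T x = (\<integral>z. s1 x z \<partial>N) + (\<integral>z. s2 x z \<partial>N)" for x
  proof -
    have "(\<integral>z. T (x - Y z) \<partial>N) / T x = (\<integral>z. T (x - Y z) / T x \<partial>N)" by simp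
    also have "\<dots> = (\<integral>z. s1 x z + s2 x z \<partial>N)" by (intro Bochner_Integration.integral_cong) (auto simp: s1_def s2_def)
    also have "\<dots> = (\<integral>z. s1 x z \<partial>N) + (\<integral>z. s2 x z \<partial>N)" by (rule Bochner_Integration.integral_add[OF is1 is2])
    finally show ?thesis .
  qed
  have lim1: "((\<lambda>x. \<integral>z. s1 x z \<partial>N) \<longlongrightarrow> (\<integral>z. exp (b * Y z) \<partial>N)) at_top"
  proof (rule integral_dominated_convergence_at_top[where w="\<lambda>z. 1 + 4 * K * exp (b * Y z)"])
    show "(\<lambda>z. exp (b * Y z)) \<in> borel_measurable N" using Y by measurable
    show "\<And>t. s1 t \<in> borel_measurable N" by (rule ms1)
    show "integrable N (\<lambda>z. 1 + 4 * K * exp (b * Y z))" using intY by auto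
    show "AE z in N. ((\<lambda>x. s1 x z) \<longlongrightarrow> exp (b * Y z)) at_top"
    proof (rule AE_I2)
      fix z
      have "eventually (\<lambda>x. T (x - Y z) / T x = s1 x z) at_top"
        using eventually_ge_at_top[of "Y z + x0"] by eventually_elim (auto simp: s1_def)
      from tendsto_cong[OF this] T_shift[OF tail sv, of "Y z"]
      show "((\<lambda>x. s1 x z) \<longlongrightarrow> exp (b * Y z)) at_top" by simp
    qed
    show "\<forall>\<^sub>F x in at_top. AE z in N. norm (s1 x z) \<le> 1 + 4 * K * exp (b * Y z)"
      using eventually_ge_at_top[of x0]
    proof eventually_elim
      case (elim x)
      show ?case
      proof (rule AE_I2)
        fix z
        have "0 \<le> s1 x z" using T_nonneg unfolding s1_def by auto
        moreover have "s1 x z \<le> 1 + 4 * K * exp (b * Y z)"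
          using rb[OF elim] Kpos unfolding s1_def by (auto intro: add_nonneg_nonneg)
        ultimately show "norm (s1 x z) \<le> 1 + 4 * K * exp (b * Y z)" by simp
      qed
    qed
  qed
  define C1 where "C1 = 2 * exp (b * x0) * K / g x0"
  define s3 where "s3 = (\<lambda>x z. if Y z \<le> x - x0 then 0 else exp (b * Y z))"
  have ms3: "s3 x \<in> borel_measurable N" for x unfolding s3_def using Y by measurable
  have lim3: "((\<lambda>x. \<integral>z. s3 x z \<partial>N) \<longlongrightarrow> (\<integral>z. 0 \<partial>N)) at_top"
  proof (rule integral_dominated_convergence_at_top[where w="\<lambda>z. exp (b * Y z)"])
    show "(\<lambda>z. 0::real) \<in> borel_measurable N" by simp
    show "\<And>t. s3 t \<in> borel_measurable N" by (rule ms3)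
    show "integrable N (\<lambda>z. exp (b * Y z))" by (rule intY)
    show "AE z in N. ((\<lambda>x. s3 x z) \<longlongrightarrow> 0) at_top"
    proof (rule AE_I2)
      fix z
      have "eventually (\<lambda>x. 0 = s3 x z) at_top"
        using eventually_ge_at_top[of "Y z + x0"] by eventually_elim (auto simp: s3_def)
      from tendsto_cong[OF this, of 0] show "((\<lambda>x. s3 x z) \<longlongrightarrow> 0) at_top"
        by simp
    qed
    show "\<forall>\<^sub>F x in at_top. AE z in N. norm (s3 x z) \<le> exp (b * Y z)"
      by (auto simp: s3_def)
  qed
  have is3: "integrable N (s3 x)" for x
    by (rule Bochner_Integration.integrable_bound[OF intY ms3]) (auto simp: s3_def)
  have s2b: "s2 x z \<le> C1 * s3 x z" if "x \<ge> x0" for x z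
  proof (cases "Y z \<le> x - x0")
    case True then show ?thesis by (simp add: s2_def s3_def)
  next
    case False
    have "T (x - Y z) / T x \<le> 1 / T x" using rb0[of x z] T_nonneg[of "x - Y z"] Tpos[OF that] by simp
    also have "\<dots> \<le> 2 / h x" using Tlo[OF that] hpos[OF that] Tpos[OF that]
      by (simp add: divide_simps)
    also have "\<dots> = 2 * exp (b * x) / g x" using gpos[OF that]
      by (simp add: h_def exp_minus field_simps)
    also have "\<dots> \<le> C1 * exp (b * Y z)"
    proof -
      have e: "exp (b * x) \<le> exp (b * x0) * exp (b * Y z)"
      proof -
        have "b * x \<le> b * (x0 + Y z)" using False b by (intro mult_left_mono) auto
        then show ?thesis by (simp add: exp_add[symmetric] algebra_simps)
      qed
      have "2 * exp (b * x) / g x \<le> 2 * exp (b * x) * K / g x0"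
        using c0[OF that] gpos[OF that] gpos[of x0] Kpos
        by (simp add: divide_simps)
      also have "\<dots> \<le> 2 * (exp (b * x0) * exp (b * Y z)) * K / g x0"
        using e gpos[of x0] Kpos by (intro divide_right_mono mult_right_mono mult_left_mono) auto
      finally show ?thesis by (simp add: C1_def field_simps)
    qed
    finally show ?thesis using False by (simp add: s2_def s3_def)
  qed
  have lim2: "((\<lambda>x. \<integral>z. s2 x z \<partial>N) \<longlongrightarrow> 0) at_top"
  proof (rule tendsto_sandwich[where f="\<lambda>_. 0" and h="\<lambda>x. C1 * (\<integral>z. s3 x z \<partial>N)"])
    show "\<forall>\<^sub>F x in at_top. 0 \<le> (\<integral>z. s2 x z \<partial>N)"
      by (intro always_eventually allI Bochner_Integration.integral_nonneg) (auto simp: s2_def T_nonneg)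
    show "\<forall>\<^sub>F x in at_top. (\<integral>z. s2 x z \<partial>N) \<le> C1 * (\<integral>z. s3 x z \<partial>N)"
      using eventually_ge_at_top[of x0]
    proof eventually_elim
      case (elim x)
      have "(\<integral>z. s2 x z \<partial>N) \<le> (\<integral>z. C1 * s3 x z \<partial>N)"
        by (intro Bochner_Integration.integral_mono is2 s2b elim) (use is3 in auto)
      then show ?case by simp
    qed
    show "((\<lambda>_. 0::real) \<longlongrightarrow> 0) at_top" by simp
    show "((\<lambda>x. C1 * (\<integral>z. s3 x z \<partial>N)) \<longlongrightarrow> 0) at_top"
      using tendsto_mult[OF tendsto_const[of C1] lim3] by simp
  qed
  show ?thesis
    unfolding split using tendsto_add[OF lim1 lim2] by simp
qed



definition FF :: "(nat \<Rightarrow> real \<times> real) \<Rightarrow> real" where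
  "FF z = (\<Sum>k. (\<Prod>i\<in>{1..k}. fst (z i)) * snd (z (Suc k)))"

lemma FF_measurable: "FF \<in> borel_measurable (PiM {1..} (\<lambda>_. borel \<Otimes>\<^sub>M borel))"
proof -
  have "(\<lambda>z::nat\<Rightarrow>real\<times>real. (\<Prod>i\<in>{1..k}. fst (z i)) * snd (z (Suc k))) \<in> borel_measurable (PiM {1..} (\<lambda>_. borel \<Otimes>\<^sub>M borel))" for k
  proof -
    have "(\<lambda>z::nat\<Rightarrow>real\<times>real. \<Prod>i\<in>{1..k}. fst (z i)) \<in> borel_measurable (PiM {1..} (\<lambda>_. borel \<Otimes>\<^sub>M borel))"
    proof (rule borel_measurable_prod[where f="\<lambda>i z. fst (z i)"])
      fix i assume "i \<in> {1..k}"
      then have "(\<lambda>z. z i) \<in> measurable (PiM {1..} (\<lambda>_. borel \<Otimes>\<^sub>M borel)) (borel \<Otimes>\<^sub>M borel)"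
        by (intro measurable_component_singleton) auto
      then show "(\<lambda>z. fst (z i)) \<in> borel_measurable (PiM {1..} (\<lambda>_. borel \<Otimes>\<^sub>M borel))"
        by measurable
    qed
    moreover
    have "(\<lambda>z. z (Suc k)) \<in> measurable (PiM {1..} (\<lambda>_. borel \<Otimes>\<^sub>M borel)) (borel \<Otimes>\<^sub>M borel)"
      by (intro measurable_component_singleton) auto
    then have "(\<lambda>z. snd (z (Suc k))) \<in> borel_measurable (PiM {1..} (\<lambda>_. borel \<Otimes>\<^sub>M borel))"
      by measurable
    ultimately show ?thesis by (rule borel_measurable_times)
  qed
  then show ?thesis unfolding FF_def by (rule borel_measurable_suminf)
qed

lemma shift_measurable:
  "(\<lambda>z. \<lambda>n\<in>{1..}. z (Suc n)) \<in> measurable (PiM J (\<lambda>_. borel \<Otimes>\<^sub>M borel)) (PiM {1::nat..} (\<lambda>_. borel \<Otimes>\<^sub>M borel))"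
  if "{2..} \<subseteq> J" for J
proof (rule measurable_restrict)
  fix n :: nat assume "n \<in> {1..}"
  then have "Suc n \<in> J" using that by auto
  then show "(\<lambda>z. z (Suc n)) \<in> measurable (PiM J (\<lambda>_. borel \<Otimes>\<^sub>M borel)) (borel \<Otimes>\<^sub>M borel)"
    by (intro measurable_component_singleton)
qed

lemma perp_decomp:
  fixes a c :: "nat \<Rightarrow> real"
  assumes sm: "summable (\<lambda>k. (\<Prod>i\<in>{1..k}. a i) * c (Suc k))"
  shows "(\<Sum>k. (\<Prod>i\<in>{1..k}. a i) * c (Suc k)) = c 1 + a 1 * (\<Sum>k. (\<Prod>i\<in>{1..k}. a (Suc i)) * c (Suc (Suc k)))"
proof -
  define f where "f = (\<lambda>k. (\<Prod>i\<in>{1..k}. a i) * c (Suc k))"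
  define h where "h = (\<lambda>k. (\<Prod>i\<in>{1..k}. a (Suc i)) * c (Suc (Suc k)))"
  have fS: "f (Suc k) = a 1 * h k" for k
  proof -
    have "(\<Prod>i\<in>{1..Suc k}. a i) = a 1 * (\<Prod>i\<in>{Suc 1..Suc k}. a i)"
      by (subst prod.atLeast_Suc_atMost) auto
    also have "(\<Prod>i\<in>{Suc 1..Suc k}. a i) = (\<Prod>i\<in>{1..k}. a (Suc i))"
      by (rule prod.shift_bounds_cl_Suc_ivl)
    finally show ?thesis by (simp add: f_def h_def)
  qed
  have f0: "f 0 = c 1" by (simp add: f_def)
  have smf: "summable f" using sm by (simp add: f_def)
  have "(\<Sum>k. f (Suc k)) = suminf f - f 0" by (rule suminf_split_head[OF smf])
  moreover have "(\<Sum>k. f (Suc k)) = a 1 * suminf h"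
  proof (cases "a 1 = 0")
    case True then show ?thesis by (simp add: fS)
  next
    case False
    have "summable (\<lambda>k. f (Suc k))" using smf by (simp add: summable_Suc_iff)
    then have "summable (\<lambda>k. a 1 * h k)" by (simp add: fS)
    then have "summable h" using False by (simp add: summable_cmult_iff)
    then show ?thesis by (simp add: fS suminf_mult)
  qed
  ultimately have "suminf f = c 1 + a 1 * suminf h" using f0 by linarith
  then show ?thesis by (simp only: f_def h_def)
qed

lemma triple_fubini:
  fixes PA PB PX :: "real measure" and x :: real
  assumes pA: "prob_space PA" and pB: "prob_space PB" and pX: "prob_space PX"
    and sA[measurable_cong]: "sets PA = sets borel" and sB[measurable_cong]: "sets PB = sets borel"
    and sX[measurable_cong]: "sets PX = sets borel"
  shows "emeasure ((PA \<Otimes>\<^sub>M PB) \<Otimes>\<^sub>M PX) {w. x < snd (fst w) + fst (fst w) * snd w}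
       = (\<integral>\<^sup>+ p. ennreal (measure PB {x - fst p * snd p <..}) \<partial>(PA \<Otimes>\<^sub>M PX))"
proof -
  define S where "S = {w::(real\<times>real)\<times>real. x < snd (fst w) + fst (fst w) * snd w}"
  have sfA: "sigma_finite_measure PA" using pA by (rule prob_space_imp_sigma_finite)
  have sfB: "sigma_finite_measure PB" using pB by (rule prob_space_imp_sigma_finite)
  have sfX: "sigma_finite_measure PX" using pX by (rule prob_space_imp_sigma_finite)
  have psBX: "pair_sigma_finite PB PX" using sfB sfX by (simp add: pair_sigma_finite_def)
  have spA: "space PA = UNIV" using sets_eq_imp_space_eq[OF sA] by simp
  have spB: "space PB = UNIV" using sets_eq_imp_space_eq[OF sB] by simp
  have spX: "space PX = UNIV" using sets_eq_imp_space_eq[OF sX] by simp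
  have "{w\<in>space ((PA \<Otimes>\<^sub>M PB) \<Otimes>\<^sub>M PX). x < snd (fst w) + fst (fst w) * snd w} \<in> sets ((PA \<Otimes>\<^sub>M PB) \<Otimes>\<^sub>M PX)"
    by measurable
  then have SS: "S \<in> sets ((PA \<Otimes>\<^sub>M PB) \<Otimes>\<^sub>M PX)"
    unfolding S_def by (simp add: space_pair_measure spA spB spX)
  have "emeasure ((PA \<Otimes>\<^sub>M PB) \<Otimes>\<^sub>M PX) S = (\<integral>\<^sup>+ w. indicator S w \<partial>((PA \<Otimes>\<^sub>M PB) \<Otimes>\<^sub>M PX))"
    using SS by simp
  also have "\<dots> = (\<integral>\<^sup>+ ab. \<integral>\<^sup>+ y. indicator S (ab, y) \<partial>PX \<partial>(PA \<Otimes>\<^sub>M PB))"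
    by (rule sigma_finite_measure.nn_integral_fst[OF sfX, symmetric]) (use SS in simp)
  also have "\<dots> = (\<integral>\<^sup>+ a. \<integral>\<^sup>+ b. \<integral>\<^sup>+ y. indicator S ((a, b), y) \<partial>PX \<partial>PB \<partial>PA)"
  proof (rule sigma_finite_measure.nn_integral_fst[OF sfB, symmetric])
    show "(\<lambda>ab. \<integral>\<^sup>+ y. indicator S (ab, y) \<partial>PX) \<in> borel_measurable (PA \<Otimes>\<^sub>M PB)"
      using SS by (intro sigma_finite_measure.borel_measurable_nn_integral[OF sfX]) simp
  qed
  also have "\<dots> = (\<integral>\<^sup>+ a. \<integral>\<^sup>+ y. \<integral>\<^sup>+ b. indicator S ((a, b), y) \<partial>PB \<partial>PX \<partial>PA)"
  proof (rule nn_integral_cong)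
    fix a
    show "(\<integral>\<^sup>+ b. \<integral>\<^sup>+ y. indicator S ((a, b), y) \<partial>PX \<partial>PB) = (\<integral>\<^sup>+ y. \<integral>\<^sup>+ b. indicator S ((a, b), y) \<partial>PB \<partial>PX)"
      by (rule pair_sigma_finite.Fubini'[OF psBX, symmetric]) (unfold S_def, measurable)
  qed
  also have "\<dots> = (\<integral>\<^sup>+ a. \<integral>\<^sup>+ y. ennreal (measure PB {x - a * y <..}) \<partial>PX \<partial>PA)"
  proof (intro nn_integral_cong)
    fix a y
    have "indicator S ((a, b), y) = (indicator {x - a * y <..} b :: ennreal)" for b
      by (simp add: S_def indicator_def algebra_simps)
    then have "(\<integral>\<^sup>+ b. indicator S ((a, b), y) \<partial>PB) = emeasure PB {x - a * y <..}"
      using sB by (simp add: nn_integral_indicator)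
    also have "\<dots> = ennreal (measure PB {x - a * y <..})"
      using pB unfolding prob_space_def by (simp add: finite_measure.emeasure_eq_measure)
    finally show "(\<integral>\<^sup>+ b. indicator S ((a, b), y) \<partial>PB) = ennreal (measure PB {x - a * y <..})" .
  qed
  also have "\<dots> = (\<integral>\<^sup>+ p. ennreal (measure PB {x - fst p * snd p <..}) \<partial>(PA \<Otimes>\<^sub>M PX))"
  proof -
    have mT: "(\<lambda>u. measure PB {x - u <..}) \<in> borel_measurable borel"
    proof (rule borel_measurable_mono, rule monoI)
      fix u v :: real assume "u \<le> v"
      then show "measure PB {x - u <..} \<le> measure PB {x - v <..}"
        using pB sB unfolding prob_space_def by (intro finite_measure.finite_measure_mono) auto
    qed
    have "(\<lambda>p. ennreal (measure PB {x - fst p * snd p <..})) \<in> borel_measurable (PA \<Otimes>\<^sub>M PX)"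
      using mT by measurable
    from sigma_finite_measure.nn_integral_fst[OF sfX this] show ?thesis by simp
  qed
  finally show ?thesis by (simp add: S_def)
qed

theorem proposition2p1:
  fixes M :: "'a measure" and A B :: "'a \<Rightarrow> real" and As Bs :: "nat \<Rightarrow> 'a \<Rightarrow> real"
    and g :: "real \<Rightarrow> real" and b :: real
  assumes P: "prob_space M"
    and rvA: "A \<in> borel_measurable M" and rvB: "B \<in> borel_measurable M"
    and rvAs: "\<And>n. As n \<in> borel_measurable M" and rvBs: "\<And>n. Bs n \<in> borel_measurable M"
    and indepAB: "prob_space.indep_var M borel A borel B"
    and indep_seq: "prob_space.indep_vars M (\<lambda>_. borel \<Otimes>\<^sub>M borel)
                      (\<lambda>n \<omega>. (As n \<omega>, Bs n \<omega>)) {1..}"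
    and ident: "\<And>n. n \<ge> 1 \<Longrightarrow>
        distr M (borel \<Otimes>\<^sub>M borel) (\<lambda>\<omega>. (As n \<omega>, Bs n \<omega>))
          = distr M (borel \<Otimes>\<^sub>M borel) (\<lambda>\<omega>. (A \<omega>, B \<omega>))"
    and conv: "AE \<omega> in M. summable (\<lambda>k. (\<Prod>i\<in>{1..k}. As i \<omega>) * Bs (Suc k) \<omega>)"
    and A1: "measure M {\<omega>\<in>space M. A \<omega> = 1} < 1"
    and cases: "measure M {\<omega>\<in>space M. 0 < A \<omega> \<and> A \<omega> \<le> 1} = 1
              \<or> measure M {\<omega>\<in>space M. -1 < A \<omega> \<and> A \<omega> < 0} = 1
              \<or> (measure M {\<omega>\<in>space M. 0 < \<bar>A \<omega>\<bar> \<and> \<bar>A \<omega>\<bar> \<le> 1} = 1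
                 \<and> 0 < measure M {\<omega>\<in>space M. A \<omega> = -1}
                 \<and> measure M {\<omega>\<in>space M. A \<omega> = -1} < 1)"
    and b_pos: "b > 0"
    and tail: "(\<lambda>x. measure M {\<omega>\<in>space M. B \<omega> > x}) \<sim>[at_top] (\<lambda>x. g x * exp (- b * x))"
    and sv: "slowly_varying (\<lambda>x. g (ln x))"
    and sup_g: "Limsup at_top (\<lambda>x. (SUP y\<in>{1..x}. ereal (g y)) / ereal (g x)) < \<infinity>"
    and finite_mgf: "(\<integral>\<^sup>+ a. mgf M (perpetuity As Bs) (b * a) \<partial>(distr M borel A)) < \<infinity>"
  shows "(\<lambda>x. measure M {\<omega>\<in>space M. perpetuity As Bs \<omega> > x})
           \<sim>[at_top] (\<lambda>x. enn2real (\<integral>\<^sup>+ a. mgf M (perpetuity As Bs) (b * a) \<partial>(distr M borel A))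
                          * measure M {\<omega>\<in>space M. B \<omega> > x})"
proof -
  interpret prob_space M by (rule P)
  define Z where "Z = (\<lambda>i \<omega>. (As i \<omega>, Bs i \<omega>))"
  define BB where "BB = (borel \<Otimes>\<^sub>M borel :: (real \<times> real) measure)"
  define D where "D = distr M BB (\<lambda>\<omega>. (A \<omega>, B \<omega>))"
  define PA where "PA = distr M borel A"
  define PB where "PB = distr M borel B"
  define X where "X = perpetuity As Bs"
  define W where "W = (\<lambda>\<omega>. \<lambda>i\<in>{1::nat..}. Z i \<omega>)"
  define W' where "W' = (\<lambda>\<omega>. \<lambda>i\<in>{1::nat..}. Z (Suc i) \<omega>)"
  define X' where "X' = (\<lambda>\<omega>. FF (W' \<omega>))"
  define PX where "PX = distr M borel X"
  have mZ[measurable]: "Z i \<in> measurable M BB" for i unfolding Z_def BB_def using rvAs rvBs by measurable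
  have mW: "W \<in> measurable M (PiM {1..} (\<lambda>_. BB))"
    unfolding W_def by (intro measurable_restrict mZ)
  have mW': "W' \<in> measurable M (PiM {1..} (\<lambda>_. BB))"
    unfolding W'_def by (intro measurable_restrict mZ)
  have X_FF: "X \<omega> = FF (W \<omega>)" for \<omega>
    unfolding X_def perpetuity_def FF_def W_def Z_def
    by (intro suminf_cong arg_cong2[where f="(*)"] prod.cong) auto
  have mFF: "FF \<in> borel_measurable (PiM {1..} (\<lambda>_. BB))" unfolding BB_def by (rule FF_measurable)
  have X_FF': "X = FF \<circ> W" using X_FF by (simp add: fun_eq_iff)
  have mX: "X \<in> borel_measurable M"
    using measurable_comp[OF mW mFF] X_FF' by simp
  have mX': "X' \<in> borel_measurable M"
    using measurable_comp[OF mW' mFF] by (simp add: o_def X'_def)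
  have probD: "prob_space D" unfolding D_def by (rule prob_space_distr) (use rvA rvB in \<open>simp add: BB_def\<close>)
  have lawW: "distr M (PiM {1..} (\<lambda>_. BB)) W = PiM {1..} (\<lambda>_. D)"
  proof -
    have "distr M (PiM {1..} (\<lambda>_. BB)) W = (PiM {1..} (\<lambda>i. distr M BB (Z i)))"
      unfolding W_def using indep_seq
      by (subst indep_vars_iff_distr_eq_PiM[symmetric]) (use mZ in \<open>auto simp: Z_def BB_def\<close>)
    also have "\<dots> = PiM {1..} (\<lambda>_. D)"
      by (intro PiM_cong refl) (simp add: D_def Z_def ident BB_def)
    finally show ?thesis .
  qed
  have lawW': "distr M (PiM {1..} (\<lambda>_. BB)) W' = PiM {1..} (\<lambda>_. D)"
  proof -
    have sh: "(\<lambda>z. \<lambda>n\<in>{1..}. z (Suc n)) \<in> measurable (PiM {1::nat..} (\<lambda>_. BB)) (PiM {1::nat..} (\<lambda>_. BB))"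
      unfolding BB_def by (rule shift_measurable) auto
    have "W' = (\<lambda>z. \<lambda>n\<in>{1..}. z (Suc n)) \<circ> W"
      by (auto simp: W'_def W_def o_def fun_eq_iff)
    then have "distr M (PiM {1..} (\<lambda>_. BB)) W' = distr (distr M (PiM {1..} (\<lambda>_. BB)) W) (PiM {1..} (\<lambda>_. BB)) (\<lambda>z. \<lambda>n\<in>{1..}. z (Suc n))"
      using distr_distr[OF sh mW] by simp
    also have "\<dots> = distr (PiM {1..} (\<lambda>_. D)) (PiM {1..} (\<lambda>_. D)) (\<lambda>z. \<lambda>n\<in>{1..}. z (Suc n))"
      unfolding lawW by (intro distr_cong refl sets_PiM_cong) (simp add: D_def)
    also have "\<dots> = PiM {1..} (\<lambda>_. D)"
      using distr_PiM_reindex[where K="{1..}" and I="{1..}" and f=Suc and M="\<lambda>_. D"] probD by auto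
    finally show ?thesis .
  qed
  have lawX': "distr M borel X' = PX"
  proof -
    have "distr M borel X' = distr (distr M (PiM {1..} (\<lambda>_. BB)) W') borel FF"
      using distr_distr[OF mFF mW'] by (simp add: o_def X'_def)
    also have "\<dots> = distr (distr M (PiM {1..} (\<lambda>_. BB)) W) borel FF" unfolding lawW lawW' ..
    also have "\<dots> = PX"
      using distr_distr[OF mFF mW] X_FF' by (simp add: PX_def)
    finally show ?thesis .
  qed
  have indseq: "indep_vars (\<lambda>_. BB) Z {1..}" using indep_seq by (simp add: Z_def BB_def)
  have ind: "prob_space.indep_var M (PiM {1} (\<lambda>_. BB)) (\<lambda>\<omega>. restrict (\<lambda>i. Z i \<omega>) {1})
      (PiM {2..} (\<lambda>_. BB)) (\<lambda>\<omega>. restrict (\<lambda>i. Z i \<omega>) {2..})"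
    by (rule indep_var_restrict[OF indseq]) auto
  have m1: "(\<lambda>z. z 1) \<in> measurable (PiM {1::nat} (\<lambda>_. BB)) BB"
    by (rule measurable_component_singleton) auto
  have m2: "FF \<circ> (\<lambda>z. \<lambda>n\<in>{1..}. z (Suc n)) \<in> borel_measurable (PiM {2::nat..} (\<lambda>_. BB))"
    by (rule measurable_comp[OF _ mFF]) (unfold BB_def, rule shift_measurable, auto)
  define R1 where "R1 = (\<lambda>\<omega>. restrict (\<lambda>i. Z i \<omega>) {1::nat})"
  define R2 where "R2 = (\<lambda>\<omega>. restrict (\<lambda>i. Z i \<omega>) {2::nat..})"
  define sh where "sh = (\<lambda>z::nat\<Rightarrow>real\<times>real. \<lambda>n\<in>{1::nat..}. z (Suc n))"
  have mR1: "R1 \<in> measurable M (PiM {1} (\<lambda>_. BB))" unfolding R1_def by (intro measurable_restrict mZ)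
  have mR2: "R2 \<in> measurable M (PiM {2..} (\<lambda>_. BB))" unfolding R2_def by (intro measurable_restrict mZ)
  have m2': "FF \<circ> sh \<in> borel_measurable (PiM {2::nat..} (\<lambda>_. BB))"
    using m2 by (simp add: sh_def)
  have R1Z: "(\<lambda>z. z 1) \<circ> R1 = Z 1" by (simp add: fun_eq_iff R1_def)
  have R2X: "(FF \<circ> sh) \<circ> R2 = X'"
  proof -
    have e: "sh (R2 \<omega>) = W' \<omega>" for \<omega>
      by (auto simp: W'_def sh_def R2_def fun_eq_iff)
    show ?thesis by (rule ext) (simp add: X'_def e)
  qed
  have ind1: "distr M (PiM {1} (\<lambda>_. BB) \<Otimes>\<^sub>M PiM {2..} (\<lambda>_. BB)) (\<lambda>\<omega>. (R1 \<omega>, R2 \<omega>))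
      = distr M (PiM {1} (\<lambda>_. BB)) R1 \<Otimes>\<^sub>M distr M (PiM {2..} (\<lambda>_. BB)) R2"
    using ind unfolding R1_def R2_def by (simp add: indep_var_distribution_eq)
  have ind2: "distr M (BB \<Otimes>\<^sub>M borel) (\<lambda>\<omega>. (Z 1 \<omega>, X' \<omega>)) = distr M BB (Z 1) \<Otimes>\<^sub>M distr M borel X'"
  proof -
    have mq: "(\<lambda>(u, v). (u 1, (FF \<circ> sh) v)) \<in> measurable (PiM {1} (\<lambda>_. BB) \<Otimes>\<^sub>M PiM {2..} (\<lambda>_. BB)) (BB \<Otimes>\<^sub>M borel)"
      using m1 m2' by measurable
    have mRR: "(\<lambda>\<omega>. (R1 \<omega>, R2 \<omega>)) \<in> measurable M (PiM {1} (\<lambda>_. BB) \<Otimes>\<^sub>M PiM {2..} (\<lambda>_. BB))"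
      using mR1 mR2 by measurable
    have "distr M (BB \<Otimes>\<^sub>M borel) (\<lambda>\<omega>. (Z 1 \<omega>, X' \<omega>))
        = distr (distr M (PiM {1} (\<lambda>_. BB) \<Otimes>\<^sub>M PiM {2..} (\<lambda>_. BB)) (\<lambda>\<omega>. (R1 \<omega>, R2 \<omega>))) (BB \<Otimes>\<^sub>M borel) (\<lambda>(u, v). (u 1, (FF \<circ> sh) v))"
      using distr_distr[OF mq mRR] R1Z R2X by (simp add: o_def fun_eq_iff)
    also have "\<dots> = distr (distr M (PiM {1} (\<lambda>_. BB)) R1) BB (\<lambda>u. u 1) \<Otimes>\<^sub>M distr (distr M (PiM {2..} (\<lambda>_. BB)) R2) borel (FF \<circ> sh)"
      unfolding ind1
    proof (rule pair_measure_distr[symmetric])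
      show "(\<lambda>u. u 1) \<in> measurable (distr M (PiM {1} (\<lambda>_. BB)) R1) BB" using m1 by simp
      show "FF \<circ> sh \<in> borel_measurable (distr M (PiM {2..} (\<lambda>_. BB)) R2)" using m2' by simp
      show "sigma_finite_measure (distr (distr M (PiM {2..} (\<lambda>_. BB)) R2) borel (FF \<circ> sh))"
      proof (rule prob_space_imp_sigma_finite, rule prob_space.prob_space_distr)
        show "prob_space (distr M (PiM {2..} (\<lambda>_. BB)) R2)" by (rule prob_space_distr[OF mR2])
      qed (use m2' in simp)
    qed
    also have "\<dots> = distr M BB (Z 1) \<Otimes>\<^sub>M distr M borel X'"
      using distr_distr[OF m1 mR1] distr_distr[OF m2' mR2] R1Z R2X by simp
    finally show ?thesis .
  qed
  have joint: "distr M (BB \<Otimes>\<^sub>M borel) (\<lambda>\<omega>. (Z 1 \<omega>, X' \<omega>)) = (PA \<Otimes>\<^sub>M PB) \<Otimes>\<^sub>M PX"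
  proof -
    have "distr M (BB \<Otimes>\<^sub>M borel) (\<lambda>\<omega>. (Z 1 \<omega>, X' \<omega>)) = distr M BB (Z 1) \<Otimes>\<^sub>M distr M borel X'"
      by (rule ind2)
    also have "distr M BB (Z 1) = D" unfolding D_def Z_def BB_def using ident[of 1] by simp
    also have "D = PA \<Otimes>\<^sub>M PB"
      using indepAB by (simp add: indep_var_distribution_eq D_def PA_def PB_def BB_def)
    finally show ?thesis using lawX' by simp
  qed
  have decomp: "AE \<omega> in M. X \<omega> = Bs 1 \<omega> + As 1 \<omega> * X' \<omega>"
    using conv
  proof eventually_elim
    case (elim \<omega>)
    have "X' \<omega> = (\<Sum>k. (\<Prod>i\<in>{1..k}. As (Suc i) \<omega>) * Bs (Suc (Suc k)) \<omega>)"
      unfolding X'_def FF_def W'_def Z_def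
      by (intro suminf_cong arg_cong2[where f="(*)"] prod.cong) auto
    then show ?case
      using perp_decomp[where a="\<lambda>i. As i \<omega>" and c="\<lambda>i. Bs i \<omega>", OF elim]
      by (simp add: X_def perpetuity_def)
  qed
  have pPA: "prob_space PA" unfolding PA_def by (rule prob_space_distr[OF rvA])
  have pPB: "prob_space PB" unfolding PB_def by (rule prob_space_distr[OF rvB])
  have pPX: "prob_space PX" unfolding PX_def by (rule prob_space_distr[OF mX])
  have sPA[measurable_cong]: "sets PA = sets borel" by (simp add: PA_def)
  have sPB[measurable_cong]: "sets PB = sets borel" by (simp add: PB_def)
  have sPX[measurable_cong]: "sets PX = sets borel" by (simp add: PX_def)
  define T where "T = (\<lambda>t. measure PB {t<..})"
  define N where "N = PA \<Otimes>\<^sub>M PX"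
  define Y where "Y = (\<lambda>p::real\<times>real. fst p * snd p)"
  have pN: "prob_space N" unfolding N_def by (rule prob_space_pair[OF pPA pPX])
  have sN[measurable_cong]: "sets N = sets (borel \<Otimes>\<^sub>M borel)"
    unfolding N_def by (intro sets_pair_measure_cong sPA sPX)
  have mY: "Y \<in> borel_measurable N" unfolding Y_def by measurable
  have sfX: "sigma_finite_measure PX" using pPX by (rule prob_space_imp_sigma_finite)
  have mT: "(\<lambda>u. T (x - u)) \<in> borel_measurable borel" for x
  proof (rule borel_measurable_mono, rule monoI)
    fix u v :: real assume "u \<le> v"
    then show "T (x - u) \<le> T (x - v)"
      unfolding T_def using pPB sPB unfolding prob_space_def by (intro finite_measure.finite_measure_mono) auto
  qed
  have Tanti: "x \<le> y \<Longrightarrow> T y \<le> T x" for x y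
    unfolding T_def using pPB sPB unfolding prob_space_def by (intro finite_measure.finite_measure_mono) auto
  have Tle1: "T x \<le> 1" for x unfolding T_def using pPB by (rule prob_space.prob_le_1)
  have hPX: "measure M {\<omega>\<in>space M. perpetuity As Bs \<omega> > x} = (\<integral>p. T (x - Y p) \<partial>N)" for x
  proof -
    have m1: "{\<omega>\<in>space M. x < Bs 1 \<omega> + As 1 \<omega> * X' \<omega>} \<in> sets M" using rvAs rvBs mX' by measurable
    have m0: "{\<omega>\<in>space M. x < X \<omega>} \<in> sets M" using mX by measurable
    have mJ: "(\<lambda>\<omega>. (Z 1 \<omega>, X' \<omega>)) \<in> measurable M (BB \<Otimes>\<^sub>M borel)" using mX' by measurable
    have mS: "{w::(real\<times>real)\<times>real. x < snd (fst w) + fst (fst w) * snd w} \<in> sets (BB \<Otimes>\<^sub>M borel)"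
    proof -
      have "{w\<in>space (BB \<Otimes>\<^sub>M borel). x < snd (fst w) + fst (fst w) * snd w} \<in> sets (BB \<Otimes>\<^sub>M borel)"
        unfolding BB_def by measurable
      then show ?thesis by (simp add: BB_def space_pair_measure)
    qed
    have "measure M {\<omega>\<in>space M. perpetuity As Bs \<omega> > x} = measure M {\<omega>\<in>space M. x < Bs 1 \<omega> + As 1 \<omega> * X' \<omega>}"
      using decomp m0 m1 unfolding X_def by (intro measure_eq_AE) auto
    also have "\<dots> = measure (distr M (BB \<Otimes>\<^sub>M borel) (\<lambda>\<omega>. (Z 1 \<omega>, X' \<omega>))) {w. x < snd (fst w) + fst (fst w) * snd w}"
      using measure_distr[OF mJ mS] by (simp add: Z_def vimage_def Int_def conj_commute)
    also have "\<dots> = enn2real (\<integral>\<^sup>+ p. ennreal (T (x - Y p)) \<partial>N)"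
      unfolding joint measure_def
      by (subst triple_fubini[OF pPA pPB pPX sPA sPB sPX]) (simp add: T_def N_def Y_def)
    also have "\<dots> = (\<integral>p. T (x - Y p) \<partial>N)"
      by (rule integral_eq_nn_integral[symmetric]) (use mT mY in \<open>auto simp: T_def\<close>)
    finally show ?thesis .
  qed
  have hE: "(\<integral>\<^sup>+ a. mgf M (perpetuity As Bs) (b * a) \<partial>(distr M borel A)) = (\<integral>\<^sup>+ p. ennreal (exp (b * Y p)) \<partial>N)"
  proof -
    have "mgf M (perpetuity As Bs) (b * a) = (\<integral>\<^sup>+ y. ennreal (exp (b * a * y)) \<partial>PX)" for a
      unfolding mgf_def PX_def X_def[symmetric] using mX by (subst nn_integral_distr) auto
    then have "(\<integral>\<^sup>+ a. mgf M (perpetuity As Bs) (b * a) \<partial>(distr M borel A)) = (\<integral>\<^sup>+ a. \<integral>\<^sup>+ y. ennreal (exp (b * a * y)) \<partial>PX \<partial>PA)"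
      by (simp add: PA_def)
    also have "\<dots> = (\<integral>\<^sup>+ p. ennreal (exp (b * Y p)) \<partial>N)"
    proof -
      have "(\<lambda>p. ennreal (exp (b * fst p * snd p))) \<in> borel_measurable (PA \<Otimes>\<^sub>M PX)" by measurable
      from sigma_finite_measure.nn_integral_fst[OF sfX this] show ?thesis
        by (simp add: N_def Y_def mult.assoc)
    qed
    finally show ?thesis .
  qed
  have intY: "integrable N (\<lambda>p. exp (b * Y p))"
    using finite_mgf unfolding hE by (intro integrableI_bounded) (use mY in auto)
  define c where "c = (\<integral>p. exp (b * Y p) \<partial>N)"
  have c_eq: "enn2real (\<integral>\<^sup>+ a. mgf M (perpetuity As Bs) (b * a) \<partial>(distr M borel A)) = c"
    unfolding hE c_def by (rule integral_eq_nn_integral[symmetric]) (use mY in auto)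
  have c_nz: "c \<noteq> 0"
  proof
    assume "c = 0"
    then have "AE p in N. exp (b * Y p) = 0"
      unfolding c_def using intY by (subst (asm) integral_nonneg_eq_0_iff_AE) auto
    then have "AE p in N. False" by simp
    then show False using prob_space.AE_False[OF pN] by simp
  qed
  have hB: "measure M {\<omega>\<in>space M. B \<omega> > x} = T x" for x
  proof -
    have "T x = measure M (B -` {x<..} \<inter> space M)"
      unfolding T_def PB_def by (rule measure_distr) (use rvB in auto)
    then show ?thesis by (simp add: vimage_def Int_def conj_commute)
  qed
  have tailT: "T \<sim>[at_top] (\<lambda>x. g x * exp (- b * x))"
    using tail unfolding hB by (simp add: fun_eq_iff)
  have Tnn: "0 \<le> T x" for x unfolding T_def by (rule measure_nonneg)
  have lim: "((\<lambda>x. (\<integral>p. T (x - Y p) \<partial>N) / T x) \<longlongrightarrow> c) at_top"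
    unfolding c_def
    by (rule tail_ratio_limit[OF b_pos Tanti Tnn Tle1 tailT sv sup_g pN mY intY])
  have "((\<lambda>x. measure M {\<omega>\<in>space M. perpetuity As Bs \<omega> > x} / measure M {\<omega>\<in>space M. B \<omega> > x}) \<longlongrightarrow> c) at_top"
    using lim unfolding hPX hB .
  from asymp_equivI'_const[OF this c_nz] show ?thesis unfolding c_eq .
qed

end
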